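(* Let $Q=(V,T,U,D,s,R)$ be a left-extended queue grammar. Then there exists a context-free grammar $G=(\overline V,T,P,S)$ with $\{0,1,\#\}\subseteq \overline V$ such that $L(Q)=L(G,F)$, where $F=\{w\#w^R\mid w\in\{0,1\}^*\}$ and the finalizing alphabet is $W=\{0,1,\#\}$.
   Context: A left-extended queue grammar is a sextuple $Q=(V,T,U,D,s,R)$ where $V,U$ are alphabets with $V\cap U=\emptyset$, $T\subseteq V$, $D\subseteq U$, $s\in(V-T)(U-D)$, and $R\subseteq (V\times(U-D))\times(V^*\times U)$ is finite. Let $\#\notin V\cup U$. For $u,v\in V^*\{\#\}V^*U$, write $u\Rightarrow v$ if $u=w\#arb$, $v=wa\#rzc$ with $a\in V$, $r,z,w\in V^*$, $b,c\in U$ and $(a,b,z,c)\in R$; $\Rightarrow^*$ is its reflexive-transitive closure. $L(Q)=\{v\in T^*\mid \#s\Rightarrow^* w\#vf$ for some $w\in V^*$, $f\in D\}$. A context-free grammar $G=(V,T,P,S)$ has total alphabet $V$, terminals $T\subseteq V$, nonterminals $N=V-T$, finite rules $P\subseteq N\times V^*$, start $S\in N$; $\phi(G)=\{w\in V^*\mid S\Rightarrow^*w\}$. For $X\subseteq V$, $\pi_X$ is the homomorphism from $V^*$ to $X^*$ keeping symbols of $X$ and erasing the others. For $W\subseteq V$ and $F\subseteq W^*$, $\phi(G,F)=\{x\in\phi(G)\mid\pi_W(x)\in F\}$ and $L(G,F)=\{\pi_T(y)\mid y\in\phi(G,F),\ \pi_{N-W}(y)=\varepsilon\}$. $w^R$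 denotes the reversal of $w$. *)

theory Defs
  imports Main
begin

text \<open>A configuration w#arb is represented
  as the triple (w, a r, b): the part left of the marker, the part between the marker
  and the state symbol, and the state symbol.\<close>

definition leqg :: "'a set \<Rightarrow> 'a set \<Rightarrow> 'a set \<Rightarrow> 'a set \<Rightarrow> 'a \<times> 'a
                   \<Rightarrow> ('a \<times> 'a \<times> 'a list \<times> 'a) set \<Rightarrow> bool" where
  "leqg V T U D s R \<longleftrightarrow>
     finite V \<and> finite U \<and> V \<inter> U = {} \<and> T \<subseteq> V \<and> D \<subseteq> U \<and>
     fst s \<in> V - T \<and> snd s \<in> U - D \<and> finite R \<and>
     (\<forall>(a, b, z, c) \<in> R. a \<in> V \<and> b \<in> U - D \<and> set z \<subseteq> V \<and> c \<in> U)"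

definition leqg_step :: "('a \<times> 'a \<times> 'a list \<times> 'a) set
      \<Rightarrow> 'a list \<times> 'a list \<times> 'a \<Rightarrow> 'a list \<times> 'a list \<times> 'a \<Rightarrow> bool" where
  "leqg_step R u v \<longleftrightarrow>
     (\<exists>w a r b z c. u = (w, a # r, b) \<and> v = (w @ [a], r @ z, c) \<and> (a, b, z, c) \<in> R)"

definition leqg_lang :: "'a set \<Rightarrow> 'a set \<Rightarrow> 'a set \<Rightarrow> 'a set \<Rightarrow> 'a \<times> 'a
      \<Rightarrow> ('a \<times> 'a \<times> 'a list \<times> 'a) set \<Rightarrow> 'a list set" where
  "leqg_lang V T U D s R =
     {v. set v \<subseteq> T \<and> (\<exists>w f. f \<in> D \<and> set w \<subseteq> V \<and>
          (leqg_step R)\<^sup>*\<^sup>* ([], [fst s], snd s) (w, v, f))}"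

definition cfg :: "'b set \<Rightarrow> 'b set \<Rightarrow> ('b \<times> 'b list) set \<Rightarrow> 'b \<Rightarrow> bool" where
  "cfg Vb Tb P S \<longleftrightarrow> finite Vb \<and> Tb \<subseteq> Vb \<and> finite P \<and>
     (\<forall>(A, \<alpha>) \<in> P. A \<in> Vb - Tb \<and> set \<alpha> \<subseteq> Vb) \<and> S \<in> Vb - Tb"

definition cfg_step :: "('b \<times> 'b list) set \<Rightarrow> 'b list \<Rightarrow> 'b list \<Rightarrow> bool" where
  "cfg_step P u v \<longleftrightarrow> (\<exists>x y A \<alpha>. u = x @ [A] @ y \<and> (A, \<alpha>) \<in> P \<and> v = x @ \<alpha> @ y)"

definition sent_forms :: "('b \<times> 'b list) set \<Rightarrow> 'b \<Rightarrow> 'b list set" where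
  "sent_forms P S = {w. (cfg_step P)\<^sup>*\<^sup>* [S] w}"

definition proj :: "'b set \<Rightarrow> 'b list \<Rightarrow> 'b list" where
  "proj X w = filter (\<lambda>x. x \<in> X) w"

definition sent_forms_ctrl :: "('b \<times> 'b list) set \<Rightarrow> 'b \<Rightarrow> 'b set \<Rightarrow> 'b list set \<Rightarrow> 'b list set" where
  "sent_forms_ctrl P S W F = {x \<in> sent_forms P S. proj W x \<in> F}"

definition cfg_lang_ctrl :: "'b set \<Rightarrow> 'b set \<Rightarrow> ('b \<times> 'b list) set \<Rightarrow> 'b
      \<Rightarrow> 'b set \<Rightarrow> 'b list set \<Rightarrow> 'b list set" where
  "cfg_lang_ctrl Vb Tb P S W F =
     {proj Tb y | y. y \<in> sent_forms_ctrl P S W F \<and> proj ((Vb - Tb) - W) y = []}"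

text \<open>Symbols of G: the terminals of Q (embedded via Tm), the three distinguished
  symbols 0, 1, # and an unbounded supply of auxiliary symbols.\<close>
datatype 'a gsym = Tm 'a | Zero | One | Hash | Aux "nat \<times> 'a list"

definition Wfin :: "'a gsym set" where
  "Wfin = {Zero, One, Hash}"

definition Fctrl :: "'a gsym list set" where
  "Fctrl = {w @ [Hash] @ rev w | w. set w \<subseteq> {Zero, One}}"

end

theory Submission imports Defs begin

definition cd :: "('a \<Rightarrow> nat) \<Rightarrow> 'a option \<Rightarrow> 'a gsym list" where
  "cd f x = replicate (case x of None \<Rightarrow> 0 | Some a \<Rightarrow> Suc (f a)) One @ [Zero]"

definition HH :: "('a \<Rightarrow> nat) \<Rightarrow> 'a option list \<Rightarrow> 'a gsym list" where
  "HH f xs = concat (map (cd f) xs)"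

definition ee :: "('a \<Rightarrow> nat) \<Rightarrow> 'a option \<Rightarrow> 'a gsym list" where
  "ee f x = (case x of None \<Rightarrow> cd f None | Some t \<Rightarrow> cd f (Some t) @ [Tm t])"

definition EE :: "('a \<Rightarrow> nat) \<Rightarrow> 'a option list \<Rightarrow> 'a gsym list" where
  "EE f xs = concat (map (ee f) xs)"

fun dropN :: "'a option list \<Rightarrow> 'a list" where
  "dropN [] = []"
| "dropN (None # xs) = dropN xs"
| "dropN (Some a # xs) = a # dropN xs"

lemma dropN_append[simp]: "dropN (xs @ ys) = dropN xs @ dropN ys"
  by (induction xs rule: dropN.induct) auto

lemma dropN_map[simp]: "dropN (map Some z) = z"
  by (induction z) auto

lemma HH_simps[simp]: "HH f [] = []" "HH f (x # xs) = cd f x @ HH f xs"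
  "HH f (xs @ ys) = HH f xs @ HH f ys"
  by (auto simp: HH_def)

lemma EE_simps[simp]: "EE f [] = []" "EE f (x # xs) = ee f x @ EE f xs"
  "EE f (xs @ ys) = EE f xs @ EE f ys"
  by (auto simp: EE_def)

lemma rep_code: "replicate m One @ Zero # r = replicate n One @ Zero # r' \<Longrightarrow> m = n \<and> r = r'"
proof (induction m arbitrary: n)
  case 0 then show ?case by (cases n) auto
next
  case (Suc m) then show ?case by (cases n) auto
qed

lemma cd_prefix: "cd f x @ r = cd f y @ r' \<Longrightarrow> cd f x = cd f y \<and> r = r'"
proof -
  assume h: "cd f x @ r = cd f y @ r'"
  obtain m n where "cd f x = replicate m One @ [Zero]" "cd f y = replicate n One @ [Zero]"
    unfolding cd_def by blast
  with h rep_code[of m r n r'] show ?thesis by simp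
qed

lemma cd_inj: "inj_on f V \<Longrightarrow> x \<in> insert None (Some ` V) \<Longrightarrow> y \<in> insert None (Some ` V)
  \<Longrightarrow> cd f x = cd f y \<Longrightarrow> x = y"
proof -
  assume a: "inj_on f V" "x \<in> insert None (Some ` V)" "y \<in> insert None (Some ` V)" "cd f x = cd f y"
  have "(case x of None \<Rightarrow> 0 | Some a \<Rightarrow> Suc (f a)) = (case y of None \<Rightarrow> 0 | Some a \<Rightarrow> Suc (f a))"
    using a(4) rep_code[of _ "[]" _ "[]"] unfolding cd_def by simp
  with a(1-3) show ?thesis by (auto simp: inj_on_def split: option.splits)
qed

lemma cd_ne: "cd f x \<noteq> []" by (simp add: cd_def)

lemma HH_inj: "inj_on f V \<Longrightarrow> set xs \<subseteq> insert None (Some ` V) \<Longrightarrow> set ys \<subseteq> insert None (Some ` V)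
  \<Longrightarrow> HH f xs = HH f ys \<Longrightarrow> xs = ys"
proof (induction xs arbitrary: ys)
  case Nil then show ?case by (cases ys) (auto simp: cd_ne)
next
  case (Cons x xs)
  then show ?case
  proof (cases ys)
    case Nil with Cons show ?thesis by (auto simp: cd_ne)
  next
    case (Cons y ys')
    with Cons.prems have "cd f x @ HH f xs = cd f y @ HH f ys'" by simp
    from cd_prefix[OF this] have "cd f x = cd f y" "HH f xs = HH f ys'" by auto
    with Cons.prems Cons Cons.IH[of ys'] cd_inj[of f V x y] show ?thesis by auto
  qed
qed

lemma set_cd: "set (cd f x) \<subseteq> {Zero, One}" by (auto simp: cd_def)
lemma set_HH: "set (HH f xs) \<subseteq> {Zero, One}" using set_cd by (fastforce simp: HH_def)

definition AS :: "'a \<Rightarrow> 'a gsym" where "AS b = Aux (0, [b])"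
abbreviation SS :: "'a gsym" where "SS \<equiv> Aux (1, [])"
abbreviation BB :: "'a gsym" where "BB \<equiv> Aux (2, [])"

definition Pg :: "('a \<Rightarrow> nat) \<Rightarrow> 'a set \<Rightarrow> 'a set \<Rightarrow> 'a set \<Rightarrow> 'a \<times> 'a
    \<Rightarrow> ('a \<times> 'a \<times> 'a list \<times> 'a) set \<Rightarrow> ('a gsym \<times> 'a gsym list) set" where
  "Pg f T U D s R = {(SS, [AS (snd s)] @ rev (cd f (Some (fst s))))}
     \<union> (\<lambda>b. (AS b, cd f None @ [AS b] @ rev (cd f None))) ` U
     \<union> (\<lambda>(a,b,z,c). (AS b, cd f (Some a) @ [AS c] @ rev (HH f (map Some z @ [None])))) ` R
     \<union> (\<lambda>b. (AS b, [BB])) ` D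
     \<union> {(BB, cd f None @ [BB]), (BB, [Hash])}
     \<union> (\<lambda>t. (BB, cd f (Some t) @ [Tm t, BB])) ` T"

inductive Rs :: "'a set \<Rightarrow> ('a \<times> 'a \<times> 'a list \<times> 'a) set \<Rightarrow> 'a \<times> 'a
   \<Rightarrow> 'a option list \<Rightarrow> 'a option list \<Rightarrow> 'a \<Rightarrow> bool" for U R s where
  base: "Rs U R s [] [] (snd s)"
| skip: "Rs U R s W Z b \<Longrightarrow> b \<in> U \<Longrightarrow> Rs U R s (W @ [None]) (Z @ [None]) b"
| real: "Rs U R s W Z b \<Longrightarrow> (a, b, z, c) \<in> R \<Longrightarrow> Rs U R s (W @ [Some a]) (Z @ map Some z @ [None]) c"

lemma Rs_len: "Rs U R s W Z b \<Longrightarrow> length W \<le> length Z"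
  by (induction rule: Rs.induct) auto

lemma Rs_inv: "Rs U R s W Z b \<Longrightarrow> leqg V T U D s R \<Longrightarrow>
   set W \<subseteq> insert None (Some ` V) \<and> set Z \<subseteq> insert None (Some ` V) \<and> b \<in> U"
proof (induction rule: Rs.induct)
  case base then show ?case by (auto simp: leqg_def)
next
  case (skip W Z b) then show ?case by auto
next
  case (real W Z b a z c)
  have "\<forall>(a, b, z, c) \<in> R. a \<in> V \<and> b \<in> U - D \<and> set z \<subseteq> V \<and> c \<in> U"
    using real.prems unfolding leqg_def by blast
  from bspec[OF this real.hyps(2)] have "a \<in> V \<and> set z \<subseteq> V \<and> c \<in> U" by simp
  with real show ?case by auto
qed

lemma cstep: "(N, \<alpha>) \<in> P \<Longrightarrow> cfg_step P (u @ [N] @ v) (u @ \<alpha> @ v)"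
  unfolding cfg_step_def by blast

lemma Rs_der: "Rs U R s W Z b \<Longrightarrow>
  (cfg_step (Pg f T U D s R))\<^sup>*\<^sup>* [SS] (HH f W @ [AS b] @ rev (HH f (Some (fst s) # Z)))"
proof (induction rule: Rs.induct)
  case base
  have "cfg_step (Pg f T U D s R) ([] @ [SS] @ []) ([] @ ([AS (snd s)] @ rev (cd f (Some (fst s)))) @ [])"
    by (rule cstep) (simp add: Pg_def)
  then show ?case by simp
next
  case (skip W Z b)
  have "cfg_step (Pg f T U D s R) (HH f W @ [AS b] @ rev (HH f (Some (fst s) # Z)))
     (HH f W @ (cd f None @ [AS b] @ rev (cd f None)) @ rev (HH f (Some (fst s) # Z)))"
    by (rule cstep) (use skip in \<open>simp add: Pg_def\<close>)
  with skip show ?case by (simp add: rtranclp.rtrancl_into_rtrancl)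
next
  case (real W Z b a z c)
  have "cfg_step (Pg f T U D s R) (HH f W @ [AS b] @ rev (HH f (Some (fst s) # Z)))
     (HH f W @ (cd f (Some a) @ [AS c] @ rev (HH f (map Some z @ [None]))) @ rev (HH f (Some (fst s) # Z)))"
  proof (rule cstep)
    have "(AS b, cd f (Some a) @ [AS c] @ rev (HH f (map Some z @ [None])))
       \<in> (\<lambda>(a,b,z,c). (AS b, cd f (Some a) @ [AS c] @ rev (HH f (map Some z @ [None])))) ` R"
      by (rule image_eqI[where x="(a,b,z,c)"]) (use real.hyps(2) in auto)
    then show "(AS b, cd f (Some a) @ [AS c] @ rev (HH f (map Some z @ [None]))) \<in> Pg f T U D s R"
      unfolding Pg_def by blast
  qed
  with real show ?case by (simp add: rtranclp.rtrancl_into_rtrancl)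
qed


lemma dropN_rep[simp]: "dropN (replicate k None) = []"
  by (induction k) auto

lemma dropN_cons_split: "dropN q = a # r \<Longrightarrow> \<exists>k r''. q = replicate k None @ Some a # r'' \<and> dropN r'' = r"
proof (induction q rule: dropN.induct)
  case 1 then show ?case by simp
next
  case (2 xs)
  then obtain k r'' where "xs = replicate k None @ Some a # r''" "dropN r'' = r" by auto
  then show ?case by (intro exI[of _ "Suc k"] exI[of _ r'']) auto
next
  case (3 b xs) then show ?case by (intro exI[of _ 0] exI[of _ xs]) auto
qed

lemma Rs_skips: "Rs U R s W Z b \<Longrightarrow> b \<in> U \<Longrightarrow> Rs U R s (W @ replicate k None) (Z @ replicate k None) b"
proof (induction k)
  case 0 then show ?case by simp
next
  case (Suc k)
  have "Rs U R s ((W @ replicate k None) @ [None]) ((Z @ replicate k None) @ [None]) b"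
    using Suc by (intro Rs.skip) auto
  then show ?case by (simp add: replicate_append_same[symmetric])
qed

lemma R_wf: "leqg V T U D s R \<Longrightarrow> (a, b, z, c) \<in> R \<Longrightarrow> a \<in> V \<and> b \<in> U - D \<and> set z \<subseteq> V \<and> c \<in> U"
proof -
  assume h: "leqg V T U D s R" "(a, b, z, c) \<in> R"
  have "\<forall>(a, b, z, c) \<in> R. a \<in> V \<and> b \<in> U - D \<and> set z \<subseteq> V \<and> c \<in> U"
    using h(1) unfolding leqg_def by blast
  from bspec[OF this h(2)] show ?thesis by simp
qed

lemma Q_to_Rs: assumes wf: "leqg V T U D s R" shows "(leqg_step R)\<^sup>*\<^sup>* ([], [fst s], snd s) C \<Longrightarrow>
  \<exists>W Z q. Rs U R s W Z (snd (snd C)) \<and> W @ q = Some (fst s) # Z \<and> dropN q = fst (snd C)"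
proof (induction rule: rtranclp_induct)
  case base
  show ?case by (intro exI[of _ "[]"] exI[of _ "[]"] exI[of _ "[Some (fst s)]"]) (auto intro: Rs.base)
next
  case (step y C)
  obtain w a r b z c where y: "y = (w, a # r, b)" and C: "C = (w @ [a], r @ z, c)" and ab: "(a, b, z, c) \<in> R"
    using step.hyps(2) unfolding leqg_step_def by blast
  obtain W Z q where h: "Rs U R s W Z b" "W @ q = Some (fst s) # Z" "dropN q = a # r"
    using step.IH y by auto
  obtain k r'' where q: "q = replicate k None @ Some a # r''" "dropN r'' = r"
    using dropN_cons_split[OF h(3)] by blast
  have bU: "b \<in> U" using R_wf[OF wf ab] by simp
  have "Rs U R s ((W @ replicate k None) @ [Some a]) ((Z @ replicate k None) @ map Some z @ [None]) c"
    by (rule Rs.real[OF Rs_skips[OF h(1) bU] ab])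
  moreover have "((W @ replicate k None) @ [Some a]) @ (r'' @ replicate k None @ map Some z @ [None])
      = Some (fst s) # (Z @ replicate k None) @ map Some z @ [None]"
    using h(2) q(1) by simp
  moreover have "dropN (r'' @ replicate k None @ map Some z @ [None]) = r @ z" using q(2) by simp
  ultimately show ?case unfolding C snd_conv fst_conv by blast
qed

lemma app_split: "xs @ q = ys @ zs \<Longrightarrow> length xs \<le> length ys \<Longrightarrow> \<exists>q1. ys = xs @ q1 \<and> q = q1 @ zs"
  by (metis append_eq_append_conv_if append_take_drop_id)

lemma Rs_to_Q: "Rs U R s W Z b \<Longrightarrow> W @ q = Some (fst s) # Z \<Longrightarrow>
   (leqg_step R)\<^sup>*\<^sup>* ([], [fst s], snd s) (dropN W, dropN q, b)"
proof (induction arbitrary: q rule: Rs.induct)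
  case base then show ?case by simp
next
  case (skip W Z b)
  have "length (W @ [None]) \<le> length (Some (fst s) # Z)" using Rs_len[OF skip.hyps(1)] by simp
  from app_split[OF _ this, of q "[None]"] skip.prems
  obtain q1 where q1: "Some (fst s) # Z = W @ [None] @ q1" "q = q1 @ [None]" by auto
  have "(leqg_step R)\<^sup>*\<^sup>* ([], [fst s], snd s) (dropN W, dropN (None # q1), b)"
    using skip.IH[of "None # q1"] q1(1) by simp
  then show ?case using q1 by simp
next
  case (real W Z b a z c)
  have "length (W @ [Some a]) \<le> length (Some (fst s) # Z)" using Rs_len[OF real.hyps(1)] by simp
  from app_split[OF _ this, of q "map Some z @ [None]"] real.prems
  obtain q1 where q1: "Some (fst s) # Z = W @ [Some a] @ q1" "q = q1 @ map Some z @ [None]" by auto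
  have "(leqg_step R)\<^sup>*\<^sup>* ([], [fst s], snd s) (dropN W, dropN (Some a # q1), b)"
    using real.IH[of "Some a # q1"] q1(1) by simp
  moreover have "leqg_step R (dropN W, a # dropN q1, b) (dropN W @ [a], dropN q1 @ z, c)"
    unfolding leqg_step_def using real.hyps(2) by blast
  ultimately show ?case using q1 by simp
qed


definition isAux :: "'a gsym \<Rightarrow> bool" where
  "isAux g = (case g of Aux _ \<Rightarrow> True | _ \<Rightarrow> False)"

lemma isAux_simps[simp]: "isAux (AS b)" "isAux (Aux p)" "\<not> isAux Zero" "\<not> isAux One" "\<not> isAux Hash"
  "\<not> isAux (Tm t)"
  by (auto simp: isAux_def AS_def)

lemma AS_simps[simp]: "AS b = AS b' \<longleftrightarrow> b = b'" "AS b \<noteq> SS" "AS b \<noteq> BB" "SS \<noteq> AS b" "BB \<noteq> AS b"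
  "AS b \<noteq> Zero" "AS b \<noteq> One" "AS b \<noteq> Hash" "AS b \<noteq> Tm t"
  by (auto simp: AS_def)

declare AS_def[simp]

lemma decomp: "u @ [m] @ v = x @ [n] @ y \<Longrightarrow> isAux n \<Longrightarrow> \<forall>g\<in>set u. \<not> isAux g \<Longrightarrow> \<forall>g\<in>set v. \<not> isAux g
  \<Longrightarrow> x = u \<and> n = m \<and> y = v"
proof (induction u arbitrary: x)
  case Nil
  then show ?case by (cases x) auto
next
  case (Cons a u)
  then show ?case by (cases x) auto
qed

lemma Pg_cases: "(N, \<alpha>) \<in> Pg f T U D s R \<Longrightarrow>
   (N = SS \<and> \<alpha> = [AS (snd s)] @ rev (cd f (Some (fst s))))
 \<or> (\<exists>b\<in>U. N = AS b \<and> \<alpha> = cd f None @ [AS b] @ rev (cd f None))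
 \<or> (\<exists>a b z c. (a, b, z, c) \<in> R \<and> N = AS b \<and> \<alpha> = cd f (Some a) @ [AS c] @ rev (HH f (map Some z @ [None])))
 \<or> (\<exists>b\<in>D. N = AS b \<and> \<alpha> = [BB])
 \<or> (N = BB \<and> \<alpha> = cd f None @ [BB]) \<or> (N = BB \<and> \<alpha> = [Hash])
 \<or> (\<exists>t\<in>T. N = BB \<and> \<alpha> = cd f (Some t) @ [Tm t, BB])"
  unfolding Pg_def
  apply (elim UnE imageE insertE emptyE)
  apply (simp_all split: prod.splits)
  apply blast
  done

lemma Pg_lhs: "(N, \<alpha>) \<in> Pg f T U D s R \<Longrightarrow> isAux N"
  unfolding Pg_def by auto

lemma noaux_cd: "g \<in> set (cd f x) \<Longrightarrow> \<not> isAux g" using set_cd by fastforce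
lemma noaux_HH: "g \<in> set (HH f x) \<Longrightarrow> \<not> isAux g" using set_HH by fastforce
lemma noaux_EE: "g \<in> set (EE f x) \<Longrightarrow> \<not> isAux g"
  by (induction x) (auto simp: ee_def noaux_cd split: option.splits)

definition Inv :: "('a \<Rightarrow> nat) \<Rightarrow> 'a set \<Rightarrow> 'a set \<Rightarrow> 'a set \<Rightarrow> 'a \<times> 'a
    \<Rightarrow> ('a \<times> 'a \<times> 'a list \<times> 'a) set \<Rightarrow> 'a gsym list \<Rightarrow> bool" where
  "Inv f T U D s R y \<longleftrightarrow> y = [SS]
   \<or> (\<exists>W Z b. Rs U R s W Z b \<and> y = HH f W @ [AS b] @ rev (HH f (Some (fst s) # Z)))
   \<or> (\<exists>W Z b q N. Rs U R s W Z b \<and> b \<in> D \<and> set q \<subseteq> insert None (Some ` T) \<and> N \<in> {BB, Hash}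
        \<and> y = HH f W @ EE f q @ [N] @ rev (HH f (Some (fst s) # Z)))"

lemma Inv_B: "Rs U R s W Z b \<Longrightarrow> b \<in> D \<Longrightarrow> set q \<subseteq> insert None (Some ` T) \<Longrightarrow> N \<in> {BB, Hash}
  \<Longrightarrow> y = HH f W @ EE f q @ [N] @ rev (HH f (Some (fst s) # Z)) \<Longrightarrow> Inv f T U D s R y"
  unfolding Inv_def by blast

lemma Inv_step: "cfg_step (Pg f T U D s R) y y' \<Longrightarrow> Inv f T U D s R y \<Longrightarrow> Inv f T U D s R y'"
proof -
  assume st: "cfg_step (Pg f T U D s R) y y'" and iv: "Inv f T U D s R y"
  obtain x N y0 \<alpha> where y: "y = x @ [N] @ y0" and r: "(N, \<alpha>) \<in> Pg f T U D s R" and y': "y' = x @ \<alpha> @ y0"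
    using st unfolding cfg_step_def by blast
  have aN: "isAux N" by (rule Pg_lhs[OF r])
  note pc = Pg_cases[OF r]
  let ?R0 = "\<lambda>Z. rev (HH f (Some (fst s) # Z))"
  have noR: "\<forall>g\<in>set (?R0 Z). \<not> isAux g" for Z
    using noaux_HH by (metis set_rev)
  consider (S) "y = [SS]" | (A) W Z b where "Rs U R s W Z b" "y = HH f W @ [AS b] @ ?R0 Z"
    | (B) W Z b q N' where "Rs U R s W Z b" "b \<in> D" "set q \<subseteq> insert None (Some ` T)" "N' \<in> {BB, Hash}"
        "y = HH f W @ EE f q @ [N'] @ ?R0 Z"
    using iv unfolding Inv_def by blast
  then show ?thesis
  proof cases
    case S
    then have "x = [] \<and> N = SS \<and> y0 = []" using y by (cases x) auto
    then have "x = []" "N = SS" "y0 = []" by auto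
    with pc have "\<alpha> = [AS (snd s)] @ rev (cd f (Some (fst s)))" by (auto simp: AS_def)
    then have "y' = HH f [] @ [AS (snd s)] @ ?R0 []" using y' \<open>x = []\<close> \<open>y0 = []\<close> by simp
    then show ?thesis unfolding Inv_def using Rs.base by blast
  next
    case (A W Z b)
    have "x = HH f W \<and> N = AS b \<and> y0 = ?R0 Z"
      by (rule decomp) (use A y aN noR noaux_HH in auto)
    then have x: "x = HH f W" and N: "N = AS b" and y0: "y0 = ?R0 Z" by auto
    from pc N consider (sk) "b \<in> U" "\<alpha> = cd f None @ [AS b] @ rev (cd f None)"
      | (re) a z c where "(a, b, z, c) \<in> R" "\<alpha> = cd f (Some a) @ [AS c] @ rev (HH f (map Some z @ [None]))"
      | (fi) "b \<in> D" "\<alpha> = [BB]"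
      by auto
    then show ?thesis
    proof cases
      case sk
      have "Rs U R s (W @ [None]) (Z @ [None]) b" by (rule Rs.skip[OF A(1) sk(1)])
      moreover have "y' = HH f (W @ [None]) @ [AS b] @ ?R0 (Z @ [None])" using y' x y0 sk by simp
      ultimately show ?thesis unfolding Inv_def by blast
    next
      case re
      have "Rs U R s (W @ [Some a]) (Z @ map Some z @ [None]) c" by (rule Rs.real[OF A(1) re(1)])
      moreover have "y' = HH f (W @ [Some a]) @ [AS c] @ ?R0 (Z @ map Some z @ [None])" using y' x y0 re by simp
      ultimately show ?thesis unfolding Inv_def by blast
    next
      case fi
      have e: "y' = HH f W @ EE f [] @ [BB] @ ?R0 Z" using y' x y0 fi by simp
      show ?thesis by (rule Inv_B[OF A(1) fi(1) _ _ e]) auto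
    qed
  next
    case (B W Z b q N')
    have "x = HH f W @ EE f q \<and> N = N' \<and> y0 = ?R0 Z"
      by (rule decomp) (use B y aN noR in \<open>auto dest: noaux_HH noaux_EE\<close>)
    then have x: "x = HH f W @ EE f q" and N: "N = N'" and y0: "y0 = ?R0 Z" by auto
    have NB: "N = BB" using aN N B(4) by auto
    from pc NB consider (n) "\<alpha> = cd f None @ [BB]" | (h) "\<alpha> = [Hash]"
      | (t) t where "t \<in> T" "\<alpha> = cd f (Some t) @ [Tm t, BB]"
      by auto
    then show ?thesis
    proof cases
      case n
      have "y' = HH f W @ EE f (q @ [None]) @ [BB] @ ?R0 Z" using y' x y0 n by (simp add: ee_def)
      moreover have "set (q @ [None]) \<subseteq> insert None (Some ` T)" using B(3) by auto
      ultimately show ?thesis using Inv_B[OF B(1,2)] by blast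
    next
      case h
      have e: "y' = HH f W @ EE f q @ [Hash] @ ?R0 Z" using y' x y0 h by simp
      show ?thesis by (rule Inv_B[OF B(1,2,3) _ e]) auto
    next
      case t
      have "y' = HH f W @ EE f (q @ [Some t]) @ [BB] @ ?R0 Z" using y' x y0 t by (simp add: ee_def)
      moreover have "set (q @ [Some t]) \<subseteq> insert None (Some ` T)" using B(3) t(1) by auto
      ultimately show ?thesis using Inv_B[OF B(1,2)] by blast
    qed
  qed
qed

lemma Inv_der: "(cfg_step (Pg f T U D s R))\<^sup>*\<^sup>* [SS] y \<Longrightarrow> Inv f T U D s R y"
proof (induction rule: rtranclp_induct)
  case base then show ?case by (simp add: Inv_def)
next
  case (step y z) then show ?case using Inv_step by blast
qed


lemma BB_exp: "set q \<subseteq> insert None (Some ` T) \<Longrightarrow>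
  (cfg_step (Pg f T U D s R))\<^sup>*\<^sup>* (u @ [BB] @ v) (u @ EE f q @ [BB] @ v)"
proof (induction q rule: rev_induct)
  case Nil then show ?case by simp
next
  case (snoc o1 q)
  then have IH: "(cfg_step (Pg f T U D s R))\<^sup>*\<^sup>* (u @ [BB] @ v) ((u @ EE f q) @ [BB] @ v)" by simp
  have "cfg_step (Pg f T U D s R) ((u @ EE f q) @ [BB] @ v) ((u @ EE f q) @ ee f o1 @ [BB] @ v)"
  proof (cases o1)
    case None
    have "cfg_step (Pg f T U D s R) ((u @ EE f q) @ [BB] @ v) ((u @ EE f q) @ (cd f None @ [BB]) @ v)"
      by (rule cstep) (simp add: Pg_def)
    then show ?thesis using None by (simp add: ee_def)
  next
    case (Some t)
    with snoc.prems have t: "t \<in> T" by auto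
    have "cfg_step (Pg f T U D s R) ((u @ EE f q) @ [BB] @ v) ((u @ EE f q) @ (cd f (Some t) @ [Tm t, BB]) @ v)"
      by (rule cstep) (use t in \<open>simp add: Pg_def\<close>)
    then show ?thesis using Some by (simp add: ee_def)
  qed
  with IH show ?case by simp
qed

lemma set_EE: "set q \<subseteq> insert None (Some ` T) \<Longrightarrow> set (EE f q) \<subseteq> {Zero, One} \<union> Tm ` T"
proof (induction q)
  case Nil then show ?case by simp
next
  case (Cons a q) then show ?case using set_cd[of f] by (auto simp: ee_def split: option.splits)
qed

lemma proj_app[simp]: "proj X (xs @ ys) = proj X xs @ proj X ys" by (simp add: proj_def)
lemma proj_nil: "set xs \<inter> X = {} \<Longrightarrow> proj X xs = []" unfolding proj_def by (induction xs) auto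
lemma proj_id: "set xs \<subseteq> X \<Longrightarrow> proj X xs = xs" unfolding proj_def by (induction xs) auto

lemma proj_W_EE: "proj Wfin (EE f q) = HH f q"
proof (induction q)
  case Nil then show ?case by (simp add: proj_def)
next
  case (Cons a q)
  have "proj Wfin (cd f x) = cd f x" for x using set_cd[of f x] by (intro proj_id) (auto simp: Wfin_def)
  moreover have "proj Wfin [Tm t] = []" for t :: 'a by (simp add: proj_def Wfin_def)
  ultimately show ?case using Cons by (auto simp: ee_def split: option.splits)
qed

lemma proj_T_EE: "set q \<subseteq> insert None (Some ` T) \<Longrightarrow> proj (Tm ` T) (EE f q) = map Tm (dropN q)"
proof (induction q)
  case Nil then show ?case by (simp add: proj_def)
next
  case (Cons a q)
  have "proj (Tm ` T) (cd f x) = []" for x using set_cd[of f x] by (intro proj_nil) auto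
  with Cons show ?case by (auto simp: ee_def proj_def split: option.splits)
qed

lemma dropN_set: "set (dropN q) = {t. Some t \<in> set q}"
  by (induction q rule: dropN.induct) auto


lemma proj_ne: "a \<in> set xs \<Longrightarrow> a \<in> X \<Longrightarrow> proj X xs \<noteq> []"
  by (auto simp: proj_def filter_empty_conv)

theorem lemma4:
  fixes V T U D :: "'a set" and s :: "'a \<times> 'a"
    and R :: "('a \<times> 'a \<times> 'a list \<times> 'a) set"
  assumes "leqg V T U D s R"
  shows "\<exists>(Vb :: 'a gsym set) P S.
           cfg Vb (Tm ` T) P S \<and> {Zero, One, Hash} \<subseteq> Vb \<and>
           map Tm ` leqg_lang V T U D s R = cfg_lang_ctrl Vb (Tm ` T) P S Wfin Fctrl"
proof -
  have fV: "finite V" "finite U" "T \<subseteq> V" "D \<subseteq> U" "fst s \<in> V - T" "snd s \<in> U - D" "finite R"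
    using assms unfolding leqg_def by auto
  have fT: "finite T" using fV(1,3) finite_subset by blast
  have fD: "finite D" using fV(2,4) finite_subset by blast
  obtain f :: "'a \<Rightarrow> nat" and n where "f ` V = {i. i < n}" and inj: "inj_on f V"
    using finite_imp_inj_to_nat_seg[OF fV(1)] by blast
  define Vb :: "'a gsym set" where "Vb = {Zero, One, Hash, SS, BB} \<union> AS ` U \<union> Tm ` T"
  define P where "P = Pg f T U D s R"
  let ?x = "fst s"
  let ?R0 = "\<lambda>Z. rev (HH f (Some ?x # Z))"
  have cdV: "set (cd f o1) \<subseteq> Vb" for o1 using set_cd[of f o1] by (auto simp: Vb_def)
  have HHV: "set (HH f xs) \<subseteq> Vb" for xs using set_HH[of f xs] by (auto simp: Vb_def)
  have SSV: "SS \<in> Vb" "BB \<in> Vb" "Hash \<in> Vb" "Aux (Suc 0, []) \<in> Vb" unfolding Vb_def by auto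
  have BBV: "SS \<notin> Tm ` T" "BB \<notin> Tm ` T" by auto
  have ASV: "b \<in> U \<Longrightarrow> Aux (0, [b]) \<in> Vb" for b unfolding Vb_def by auto
  have HashV: "AS b \<notin> Tm ` T" for b by auto
  have TmV: "t \<in> T \<Longrightarrow> Tm t \<in> Vb" for t unfolding Vb_def by auto
  have cfgG: "cfg Vb (Tm ` T) P SS"
    unfolding cfg_def
  proof (intro conjI)
    show "finite Vb" unfolding Vb_def using fV(2) fT by simp
    show "Tm ` T \<subseteq> Vb" unfolding Vb_def by auto
    show "finite P" unfolding P_def Pg_def using fV(2,7) fT fD by simp
    show "SS \<in> Vb - Tm ` T" unfolding Vb_def by auto
    show "\<forall>(A, \<alpha>)\<in>P. A \<in> Vb - Tm ` T \<and> set \<alpha> \<subseteq> Vb"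
    proof (intro ballI, clarify)
      fix A \<alpha> assume "(A, \<alpha>) \<in> P"
      then have pc: "(A = SS \<and> \<alpha> = [AS (snd s)] @ rev (cd f (Some (fst s))))
       \<or> (\<exists>b\<in>U. A = AS b \<and> \<alpha> = cd f None @ [AS b] @ rev (cd f None))
       \<or> (\<exists>a b z c. (a, b, z, c) \<in> R \<and> A = AS b \<and> \<alpha> = cd f (Some a) @ [AS c] @ rev (HH f (map Some z @ [None])))
       \<or> (\<exists>b\<in>D. A = AS b \<and> \<alpha> = [BB])
       \<or> (A = BB \<and> \<alpha> = cd f None @ [BB]) \<or> (A = BB \<and> \<alpha> = [Hash])
       \<or> (\<exists>t\<in>T. A = BB \<and> \<alpha> = cd f (Some t) @ [Tm t, BB])"
        unfolding P_def by (rule Pg_cases)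
      then show "A \<in> Vb - Tm ` T \<and> set \<alpha> \<subseteq> Vb"
      proof (elim disjE bexE exE conjE)
        fix a b z c assume h: "(a, b, z, c) \<in> R" "A = AS b"
          "\<alpha> = cd f (Some a) @ [AS c] @ rev (HH f (map Some z @ [None]))"
        have "b \<in> U" "c \<in> U" using R_wf[OF assms h(1)] by auto
        then show ?thesis using h by (auto simp: ASV cdV HHV)
      qed (use fV(4,6) in \<open>auto simp: SSV BBV ASV HashV TmV cdV\<close>)
    qed
  qed
  have sub: "{Zero, One, Hash} \<subseteq> Vb" unfolding Vb_def by auto
  have HHW: "proj Wfin (HH f xs) = HH f xs" for xs
    using set_HH[of f xs] by (intro proj_id) (auto simp: Wfin_def)
  have HHWr: "proj Wfin (rev (HH f xs)) = rev (HH f xs)" for xs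
    using set_HH[of f xs] by (intro proj_id) (auto simp: Wfin_def)
  have HHT: "proj (Tm ` T) (HH f xs) = []" for xs
    using set_HH[of f xs] by (intro proj_nil) auto
  have HHTr: "proj (Tm ` T) (rev (HH f xs)) = []" for xs
    using set_HH[of f xs] by (intro proj_nil) auto
  have HashW: "proj Wfin [Hash] = [Hash]" by (simp add: proj_def Wfin_def)
  have HashT: "proj (Tm ` T) [Hash] = []" by (auto simp: proj_def)
  have "map Tm ` leqg_lang V T U D s R = cfg_lang_ctrl Vb (Tm ` T) P SS Wfin Fctrl"
  proof (intro equalityI subsetI)
    fix u assume "u \<in> map Tm ` leqg_lang V T U D s R"
    then obtain v w g where u: "u = map Tm v" and vT: "set v \<subseteq> T" and gD: "g \<in> D"
      and der: "(leqg_step R)\<^sup>*\<^sup>* ([], [fst s], snd s) (w, v, g)"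
      unfolding leqg_lang_def by blast
    obtain W Z q where h: "Rs U R s W Z g" "W @ q = Some ?x # Z" "dropN q = v"
      using Q_to_Rs[OF assms der] by auto
    have sq: "set q \<subseteq> insert None (Some ` T)"
    proof
      fix o1 assume o1: "o1 \<in> set q"
      have qT: "{t. Some t \<in> set q} \<subseteq> T" using vT h(3) dropN_set[of q] by simp
      show "o1 \<in> insert None (Some ` T)"
      proof (cases o1)
        case (Some t)
        with o1 qT have "t \<in> T" by blast
        with Some show ?thesis by blast
      qed simp
    qed
    define y where "y = HH f W @ EE f q @ [Hash] @ ?R0 Z"
    have d1: "(cfg_step P)\<^sup>*\<^sup>* [SS] (HH f W @ [AS g] @ ?R0 Z)"
      unfolding P_def by (rule Rs_der[OF h(1)])
    have s1: "cfg_step P (HH f W @ [AS g] @ ?R0 Z) (HH f W @ [BB] @ ?R0 Z)"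
      unfolding P_def by (rule cstep) (use gD in \<open>simp add: Pg_def\<close>)
    have s2: "(cfg_step P)\<^sup>*\<^sup>* (HH f W @ [BB] @ ?R0 Z) (HH f W @ EE f q @ [BB] @ ?R0 Z)"
      unfolding P_def by (rule BB_exp[OF sq])
    have s3: "cfg_step P ((HH f W @ EE f q) @ [BB] @ ?R0 Z) ((HH f W @ EE f q) @ [Hash] @ ?R0 Z)"
      unfolding P_def by (rule cstep) (simp add: Pg_def)
    have d2: "(cfg_step P)\<^sup>*\<^sup>* [SS] (HH f W @ [BB] @ ?R0 Z)"
      by (rule rtranclp.rtrancl_into_rtrancl[OF d1 s1])
    have d3: "(cfg_step P)\<^sup>*\<^sup>* [SS] ((HH f W @ EE f q) @ [BB] @ ?R0 Z)"
      using rtranclp_trans[OF d2 s2] by (simp only: append_assoc)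
    have "(cfg_step P)\<^sup>*\<^sup>* [SS] ((HH f W @ EE f q) @ [Hash] @ ?R0 Z)"
      by (rule rtranclp.rtrancl_into_rtrancl[OF d3 s3])
    then have "(cfg_step P)\<^sup>*\<^sup>* [SS] y" unfolding y_def by (simp only: append_assoc)
    then have ysf: "y \<in> sent_forms P SS" by (simp add: sent_forms_def)
    have "proj Wfin y = HH f W @ HH f q @ [Hash] @ ?R0 Z"
      unfolding y_def by (simp only: proj_app HHW HHWr proj_W_EE HashW)
    also have "\<dots> = HH f (W @ q) @ [Hash] @ rev (HH f (W @ q))"
      unfolding h(2)[symmetric] by (simp only: HH_simps(3) append_assoc)
    finally have "proj Wfin y = HH f (W @ q) @ [Hash] @ rev (HH f (W @ q))" .
    then have "proj Wfin y \<in> Fctrl" unfolding Fctrl_def using set_HH[of f "W @ q"] by blast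
    with ysf have yc: "y \<in> sent_forms_ctrl P SS Wfin Fctrl" by (simp add: sent_forms_ctrl_def)
    have "set y \<subseteq> {Zero, One, Hash} \<union> Tm ` T"
    proof -
      have "set (HH f W) \<subseteq> {Zero, One, Hash} \<union> Tm ` T" using set_HH[of f W] by blast
      moreover have "set (EE f q) \<subseteq> {Zero, One, Hash} \<union> Tm ` T" using set_EE[OF sq, of f] by blast
      moreover have "set (?R0 Z) \<subseteq> {Zero, One, Hash} \<union> Tm ` T" using set_HH[of f "Some ?x # Z"]
        by (simp only: set_rev) blast
      ultimately show ?thesis unfolding y_def by (simp only: set_append list.set) blast
    qed
    then have y0: "proj ((Vb - Tm ` T) - Wfin) y = []"
      by (intro proj_nil) (auto simp: Wfin_def)
    have "proj (Tm ` T) y = u" unfolding y_def u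
      by (simp only: proj_app proj_T_EE[OF sq] HHT HHTr HashT h(3) append_Nil append_Nil2)
    with yc y0 show "u \<in> cfg_lang_ctrl Vb (Tm ` T) P SS Wfin Fctrl"
      unfolding cfg_lang_ctrl_def by blast
  next
    fix u assume "u \<in> cfg_lang_ctrl Vb (Tm ` T) P SS Wfin Fctrl"
    then obtain y where u: "u = proj (Tm ` T) y" and yc: "y \<in> sent_forms_ctrl P SS Wfin Fctrl"
      and y0: "proj ((Vb - Tm ` T) - Wfin) y = []"
      unfolding cfg_lang_ctrl_def by blast
    have "(cfg_step (Pg f T U D s R))\<^sup>*\<^sup>* [SS] y" using yc
      by (simp add: sent_forms_ctrl_def sent_forms_def P_def)
    then have iv: "Inv f T U D s R y" by (rule Inv_der)
    have yF: "proj Wfin y \<in> Fctrl" using yc by (simp add: sent_forms_ctrl_def)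
    consider (S) "y = [SS]" | (A) W Z b where "Rs U R s W Z b" "y = HH f W @ [AS b] @ ?R0 Z"
      | (B) W Z b q N' where "Rs U R s W Z b" "b \<in> D" "set q \<subseteq> insert None (Some ` T)" "N' \<in> {BB, Hash}"
        "y = HH f W @ EE f q @ [N'] @ ?R0 Z"
      using iv unfolding Inv_def by blast
    then show "u \<in> map Tm ` leqg_lang V T U D s R"
    proof cases
      case S
      have m1: "SS \<in> (Vb - Tm ` T) - Wfin" unfolding Vb_def Wfin_def by (simp add: image_iff)
      have m2: "SS \<in> set y" using S by simp
      have False using proj_ne[OF m2 m1] y0 by simp
      then show ?thesis by (rule FalseE)
    next
      case (A W Z b)
      have "b \<in> U" using Rs_inv[OF A(1) assms] by blast
      then have m1: "AS b \<in> (Vb - Tm ` T) - Wfin" unfolding Vb_def Wfin_def by (simp add: image_iff)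
      have m2: "AS b \<in> set y" unfolding A(2) by (simp del: AS_def)
      have False using proj_ne[OF m2 m1] y0 by simp
      then show ?thesis by (rule FalseE)
    next
      case (B W Z b q N')
      have inv: "set W \<subseteq> insert None (Some ` V)" "set Z \<subseteq> insert None (Some ` V)" "b \<in> U"
        using Rs_inv[OF B(1) assms] by auto
      show ?thesis
      proof (cases "N' = BB")
        case True
        have m1: "BB \<in> (Vb - Tm ` T) - Wfin" unfolding Vb_def Wfin_def by (simp add: image_iff)
        have m2: "BB \<in> set y" unfolding B(5) True by simp
        have False using proj_ne[OF m2 m1] y0 by simp
        then show ?thesis by (rule FalseE)
      next
        case False
        then have NH: "N' = Hash" using B(4) by auto
        have "proj Wfin y = HH f W @ HH f q @ [Hash] @ ?R0 Z"
          unfolding B(5) NH by (simp only: proj_app HHW HHWr proj_W_EE HashW)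
        then have "proj Wfin y = HH f (W @ q) @ Hash # rev (HH f (Some ?x # Z))"
          by (simp only: HH_simps(3) append_assoc append_Cons append_Nil)
        with yF obtain w0 where w0: "set w0 \<subseteq> {Zero, One}"
          "HH f (W @ q) @ Hash # rev (HH f (Some ?x # Z)) = w0 @ Hash # rev w0"
          unfolding Fctrl_def by auto
        have nh1: "Hash \<notin> set (HH f (W @ q))" using set_HH[of f "W @ q"] by blast
        have nh2: "Hash \<notin> set (rev (HH f (Some ?x # Z)))" using set_HH[of f "Some ?x # Z"]
          by (simp only: set_rev) blast
        have "HH f (W @ q) = w0 \<and> rev (HH f (Some ?x # Z)) = rev w0"
          by (rule iffD1[OF append_Cons_eq_iff[OF nh1 nh2] w0(2)])
        then have e1: "HH f (W @ q) = w0" and e2: "rev (HH f (Some ?x # Z)) = rev w0" by (rule conjunct1, rule conjunct2)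
        from e2 have e3: "HH f (Some ?x # Z) = w0" by (simp only: rev_is_rev_conv)
        have "HH f (W @ q) = HH f (Some ?x # Z)" by (simp only: e1 e3)
        moreover have "set (W @ q) \<subseteq> insert None (Some ` V)" using inv(1) B(3) fV(3) by auto
        moreover have "set (Some ?x # Z) \<subseteq> insert None (Some ` V)" using inv(2) fV(5) by auto
        ultimately have eq: "W @ q = Some ?x # Z" using HH_inj[OF inj] by blast
        have der: "(leqg_step R)\<^sup>*\<^sup>* ([], [fst s], snd s) (dropN W, dropN q, b)"
          by (rule Rs_to_Q[OF B(1) eq])
        have "set (dropN q) \<subseteq> T" using B(3) dropN_set[of q] by auto
        moreover have "set (dropN W) \<subseteq> V" using inv(1) dropN_set[of W] by auto
        ultimately have "dropN q \<in> leqg_lang V T U D s R"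
          unfolding leqg_lang_def using der B(2) by blast
        moreover have "u = map Tm (dropN q)"
          unfolding u B(5) NH by (simp only: proj_app proj_T_EE[OF B(3)] HHT HHTr HashT append_Nil append_Nil2)
        ultimately show ?thesis by blast
      qed
    qed
  qed
  with cfgG sub show ?thesis by blast
qed

end
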